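(* At every point $R\in V_N$ with $q(R)>0$, the curvature tensor $$S_{pqrs}=C_{tqr}\,C_p{}^t{}_s-C_{tqs}\,C_p{}^t{}_r,\qquad C_p{}^t{}_s=g^{tu}C_{pus},$$ of the Finsleroid metric function is $$S_{pqrs}=S^*\,\frac{h_{pr}h_{qs}-h_{ps}h_{qr}}{K^2}\quad\text{with}\quad S^*=-\frac14g^2 .$$
   Context: Let $N\ge2$, $V_N=\mathbb{R}^N$ with points $R=(R^1,\dots,R^N)$, $Z=R^N$; indices $a,b$ run over $1,\dots,N-1$, indices $p,q,r,s,t,u$ over $1,\dots,N$, repeated indices summed. Fix a symmetric positive-definite matrix $(r_{ab})$, $q(R)=\sqrt{r_{ab}R^aR^b}$. Fix $g\in(-2,2)$, $h=\sqrt{1-g^2/4}$, $G=g/h$. Define $B(g;R)=Z^2+gqZ+q^2$, $A(g;R)=Z+\frac12gq$, $\Phi(g;R)=\arctan(A/(hq))$ for $q>0$ ($\Phi=\pm\pi/2$ if $q=0$, $Z\gtrless0$), $J=e^{\frac12G\Phi}$, and $K(g;R)=\sqrt{B}\,J$. Let $g_{pq}=\frac12\partial^2K^2/\partial R^p\partial R^q$ with inverse $g^{pq}$, $R_p=\frac12\partial K^2/\partial R^p$, $h_{pq}=g_{pq}-R_pR_q/K^2$, and Cartan tensor $C_{pqr}=\frac12\partial g_{pq}/\partial R^r$. *)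

theory Defs
  imports "HOL-Analysis.Analysis"
begin

text \<open>Points of V_N are modelled as functions nat => real; only the coordinates
  1..N are used.  Indices a,b range over {1..<N}, indices p,q,... over {1..N}.
  Z = R N.\<close>

definition fq :: "nat \<Rightarrow> (nat \<Rightarrow> nat \<Rightarrow> real) \<Rightarrow> (nat \<Rightarrow> real) \<Rightarrow> real" where
  "fq N rr R = sqrt (\<Sum>a\<in>{1..<N}. \<Sum>b\<in>{1..<N}. rr a b * R a * R b)"

definition fh :: "real \<Rightarrow> real" where
  "fh g = sqrt (1 - g^2 / 4)"

definition fG :: "real \<Rightarrow> real" where
  "fG g = g / fh g"

definition fB :: "nat \<Rightarrow> (nat \<Rightarrow> nat \<Rightarrow> real) \<Rightarrow> real \<Rightarrow> (nat \<Rightarrow> real) \<Rightarrow> real" where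
  "fB N rr g R = (R N)^2 + g * fq N rr R * R N + (fq N rr R)^2"

definition fA :: "nat \<Rightarrow> (nat \<Rightarrow> nat \<Rightarrow> real) \<Rightarrow> real \<Rightarrow> (nat \<Rightarrow> real) \<Rightarrow> real" where
  "fA N rr g R = R N + g * fq N rr R / 2"

text \<open>At q = 0 the paper sets Phi = pi/2 for Z > 0 and -pi/2 for Z < 0; at the origin
  (q = 0, Z = 0) we take -pi/2 (irrelevant, since B = 0 there).\<close>
definition fPhi :: "nat \<Rightarrow> (nat \<Rightarrow> nat \<Rightarrow> real) \<Rightarrow> real \<Rightarrow> (nat \<Rightarrow> real) \<Rightarrow> real" where
  "fPhi N rr g R =
     (if fq N rr R > 0 then arctan (fA N rr g R / (fh g * fq N rr R))
      else if R N > 0 then pi / 2 else - (pi / 2))"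

definition fJ :: "nat \<Rightarrow> (nat \<Rightarrow> nat \<Rightarrow> real) \<Rightarrow> real \<Rightarrow> (nat \<Rightarrow> real) \<Rightarrow> real" where
  "fJ N rr g R = exp (fG g * fPhi N rr g R / 2)"

definition fK :: "nat \<Rightarrow> (nat \<Rightarrow> nat \<Rightarrow> real) \<Rightarrow> real \<Rightarrow> (nat \<Rightarrow> real) \<Rightarrow> real" where
  "fK N rr g R = sqrt (fB N rr g R) * fJ N rr g R"

definition pd :: "((nat \<Rightarrow> real) \<Rightarrow> real) \<Rightarrow> nat \<Rightarrow> (nat \<Rightarrow> real) \<Rightarrow> real" where
  "pd f p R = deriv (\<lambda>t. f (R(p := R p + t))) 0"

definition fK2 :: "nat \<Rightarrow> (nat \<Rightarrow> nat \<Rightarrow> real) \<Rightarrow> real \<Rightarrow> (nat \<Rightarrow> real) \<Rightarrow> real" where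
  "fK2 N rr g R = (fK N rr g R)^2"

definition gmet :: "nat \<Rightarrow> (nat \<Rightarrow> nat \<Rightarrow> real) \<Rightarrow> real \<Rightarrow> nat \<Rightarrow> nat \<Rightarrow> (nat \<Rightarrow> real) \<Rightarrow> real" where
  "gmet N rr g p q R = pd (\<lambda>X. pd (fK2 N rr g) q X) p R / 2"

definition Rlow :: "nat \<Rightarrow> (nat \<Rightarrow> nat \<Rightarrow> real) \<Rightarrow> real \<Rightarrow> nat \<Rightarrow> (nat \<Rightarrow> real) \<Rightarrow> real" where
  "Rlow N rr g p R = pd (fK2 N rr g) p R / 2"

definition hten :: "nat \<Rightarrow> (nat \<Rightarrow> nat \<Rightarrow> real) \<Rightarrow> real \<Rightarrow> nat \<Rightarrow> nat \<Rightarrow> (nat \<Rightarrow> real) \<Rightarrow> real" where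
  "hten N rr g p q R = gmet N rr g p q R - Rlow N rr g p R * Rlow N rr g q R / (fK N rr g R)^2"

definition Cartan :: "nat \<Rightarrow> (nat \<Rightarrow> nat \<Rightarrow> real) \<Rightarrow> real \<Rightarrow> nat \<Rightarrow> nat \<Rightarrow> nat \<Rightarrow> (nat \<Rightarrow> real) \<Rightarrow> real" where
  "Cartan N rr g p q r R = pd (\<lambda>X. gmet N rr g p q X) r R / 2"

text \<open>Inverse metric g^pq: the inverse matrix of (g_pq)_{p,q in 1..N}
  (entries outside 1..N set to 0 to make it unique).\<close>
definition ginv :: "nat \<Rightarrow> (nat \<Rightarrow> nat \<Rightarrow> real) \<Rightarrow> real \<Rightarrow> (nat \<Rightarrow> real) \<Rightarrow> nat \<Rightarrow> nat \<Rightarrow> real" where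
  "ginv N rr g R = (THE M.
      (\<forall>p\<in>{1..N}. \<forall>s\<in>{1..N}. (\<Sum>q\<in>{1..N}. gmet N rr g p q R * M q s) = (if p = s then 1 else 0))
    \<and> (\<forall>p q. p \<notin> {1..N} \<or> q \<notin> {1..N} \<longrightarrow> M p q = 0))"

definition Cmixed :: "nat \<Rightarrow> (nat \<Rightarrow> nat \<Rightarrow> real) \<Rightarrow> real \<Rightarrow> nat \<Rightarrow> nat \<Rightarrow> nat \<Rightarrow> (nat \<Rightarrow> real) \<Rightarrow> real" where
  "Cmixed N rr g p t s R = (\<Sum>u\<in>{1..N}. ginv N rr g R t u * Cartan N rr g p u s R)"

definition Scurv :: "nat \<Rightarrow> (nat \<Rightarrow> nat \<Rightarrow> real) \<Rightarrow> real \<Rightarrow> nat \<Rightarrow> nat \<Rightarrow> nat \<Rightarrow> nat \<Rightarrow> (nat \<Rightarrow> real) \<Rightarrow> real" where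
  "Scurv N rr g p q r s R =
     (\<Sum>t\<in>{1..N}. Cartan N rr g t q r R * Cmixed N rr g p t s R
                 - Cartan N rr g t q s R * Cmixed N rr g p t r R)"

end

theory Submission
  imports Defs "Jordan_Normal_Form.Determinant"
begin

definition LN :: "(nat \<Rightarrow> real) \<Rightarrow> nat \<Rightarrow> real \<Rightarrow> nat \<Rightarrow> real" where
  "LN X p t = X(p := X p + t)"

lemma LN0[simp]: "LN X p 0 = X" by (simp add: LN_def)

lemma LN_app: "LN X p t i = (if i = p then X i + t else X i)" by (simp add: LN_def)

lemma d_coord: "((\<lambda>t. LN X p t i) has_real_derivative (if i = p then 1 else 0)) (at 0)"
  by (cases "i = p") (auto simp: LN_app intro!: derivative_eq_intros)

lemma d_coord'[derivative_intros]: "D = (if i = p then 1 else 0) \<Longrightarrow> ((\<lambda>t. LN X p t i) has_real_derivative D) (at 0)"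
  using d_coord by simp

lemma DERIV_eq: "(f has_real_derivative D) F \<Longrightarrow> D = E \<Longrightarrow> (f has_real_derivative E) F"
  by simp

lemma sum_if_out: "(\<Sum>b\<in>S. if c then f b else (0::real)) = (if c then \<Sum>b\<in>S. f b else 0)"
  by (cases c) auto

lemma ev_pos:
  fixes f :: "real \<Rightarrow> real"
  assumes "(f has_real_derivative D) (at 0)" "f 0 > 0"
  shows "eventually (\<lambda>t. f t > 0) (nhds 0)"
proof -
  have "isCont f 0" using DERIV_isCont[OF assms(1)] .
  hence "(f \<longlongrightarrow> f 0) (at 0)" by (simp add: isCont_def)
  hence "eventually (\<lambda>t. f t > 0) (at 0)" using assms(2) by (rule order_tendstoD(1))
  hence "eventually (\<lambda>t. t \<noteq> 0 \<longrightarrow> f t > 0) (nhds 0)" by (simp add: eventually_at_filter)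
  thus ?thesis by (rule eventually_mono) (use assms(2) in auto)
qed

lemma alg4:
  fixes P g Z q ep ej er kp kj kr rjp rpj rpr rjr B mp mj mr dkp dB dmp yj :: real
  assumes q: "q \<noteq> 0" and B: "B = Z^2 + g*q*Z + q^2" and Bn: "B \<noteq> 0"
    and "mp = (q*ep - Z*kp)/B" and "mj = (q*ej - Z*kj)/B" and "mr = (q*er - Z*kr)/B"
    and "dkp = (rpr - kp*kr)/q"
    and "dB = 2*Z*er + g*(kr*Z + q*er) + 2*q*kr"
    and "dmp = ((kr*ep - (er*kp + Z*dkp))*B - (q*ep - Z*kp)*dB)/B^2"
    and "yj = q*kj" and "rpj = rjp"
  shows "P*g*mr*(rjp + (ep + g*kp)*ej + g*mp*(yj + (Z + g*q)*ej))
        + (g*dkp*ej + g*dmp*(yj + (Z + g*q)*ej) + g*mp*(rjr + (er + g*kr)*ej)) * P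
       = 2 * (g/2 * P * ((rpj - kp*kj)*mr + (rpr - kp*kr)*mj + (rjr - kj*kr)*mp + 2*B*mp*mj*mr))"
  unfolding assms(4-)
  using q Bn apply (simp add: field_simps power2_eq_square)
  using B unfolding power2_eq_square by Groebner_Basis.algebra

locale fins =
  fixes N :: nat and rr :: "nat \<Rightarrow> nat \<Rightarrow> real" and g :: real
  assumes N2: "N \<ge> 2"
    and rsym: "\<forall>a\<in>{1..<N}. \<forall>b\<in>{1..<N}. rr a b = rr b a"
    and rpos: "\<forall>x :: nat \<Rightarrow> real. (\<exists>a\<in>{1..<N}. x a \<noteq> 0) \<longrightarrow>
           (\<Sum>a\<in>{1..<N}. \<Sum>b\<in>{1..<N}. rr a b * x a * x b) > 0"
    and gl: "-2 < g" and gu: "g < 2"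
begin

definition Qf where "Qf X = (\<Sum>a\<in>{1..<N}. \<Sum>b\<in>{1..<N}. rr a b * X a * X b)"
definition yl where "yl X p = (if p \<in> {1..<N} then \<Sum>b\<in>{1..<N}. rr p b * X b else 0)"
definition ee :: "nat \<Rightarrow> real" where "ee p = (if p = N then 1 else 0)"
definition r0 where "r0 p q = (if p \<in> {1..<N} \<and> q \<in> {1..<N} then rr p q else 0)"
abbreviation qq where "qq X \<equiv> fq N rr X"
abbreviation BB where "BB X \<equiv> fB N rr g X"
definition kk where "kk X p = yl X p / qq X"
definition PP where "PP X = exp (fG g * fPhi N rr g X)"
definition mm where "mm X p = (qq X * ee p - X N * kk X p) / BB X"

lemma hpos: "fh g > 0"
proof -
  have "(2-g)*(2+g) > 0" using gl gu by simp
  hence "g^2 < 4" by (simp add: power2_eq_square algebra_simps)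
  thus ?thesis unfolding fh_def by simp
qed

lemma hsq: "(fh g)^2 = 1 - g^2/4"
proof -
  have "(2-g)*(2+g) > 0" using gl gu by simp
  hence "g^2 < 4" by (simp add: power2_eq_square algebra_simps)
  thus ?thesis unfolding fh_def by simp
qed

lemma qq_Qf: "qq X = sqrt (Qf X)" by (simp add: fq_def Qf_def)

lemma BB_eq: "BB X = (X N + g * qq X / 2)^2 + (fh g)^2 * (qq X)^2"
  unfolding fB_def hsq by (simp add: power2_eq_square algebra_simps)

lemma BB_pos: "qq X > 0 \<Longrightarrow> BB X > 0"
  unfolding BB_eq using hpos by (intro add_nonneg_pos) auto

lemma yl_N[simp]: "yl X N = 0" by (simp add: yl_def)
lemma kk_N[simp]: "kk X N = 0" by (simp add: kk_def)
lemma ee_N[simp]: "ee N = 1" by (simp add: ee_def)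

lemma d_Qf:
  assumes p: "p \<in> {1..N}"
  shows "((\<lambda>t. Qf (LN X p t)) has_real_derivative 2 * yl X p) (at 0)"
proof -
  have "((\<lambda>t. Qf (LN X p t)) has_real_derivative
     (\<Sum>a\<in>{1..<N}. \<Sum>b\<in>{1..<N}. rr a b * ((if a = p then 1 else 0) * X b + X a * (if b = p then 1 else 0)))) (at 0)"
    unfolding Qf_def
    apply (intro DERIV_sum)
    apply (rule DERIV_eq)
     apply (rule DERIV_mult[OF DERIV_cmult[OF d_coord] d_coord])
    by (simp add: algebra_simps)
  moreover have "(\<Sum>a\<in>{1..<N}. \<Sum>b\<in>{1..<N}. rr a b * ((if a = p then 1 else 0) * X b + X a * (if b = p then 1 else 0)))
      = 2 * yl X p"
  proof (cases "p \<in> {1..<N}")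
    case True
    have pt: "\<And>a b. rr a b * ((if a = p then 1 else 0) * X b + X a * (if b = p then 1 else 0)) = (if a = p then rr p b * X b else 0) + (if b = p then rr a p * X a else 0)"
      by auto
    have "(\<Sum>a\<in>{1..<N}. \<Sum>b\<in>{1..<N}. rr a b * ((if a = p then 1 else 0) * X b + X a * (if b = p then 1 else 0)))
       = (\<Sum>a\<in>{1..<N}. (if a = p then (\<Sum>b\<in>{1..<N}. rr p b * X b) else 0)) + (\<Sum>a\<in>{1..<N}. \<Sum>b\<in>{1..<N}. (if b = p then rr a p * X a else 0))"
      unfolding pt sum.distrib sum_if_out by simp
    also have "\<dots> = (\<Sum>b\<in>{1..<N}. rr p b * X b) + (\<Sum>a\<in>{1..<N}. rr a p * X a)"
      using True by (simp add: sum.delta')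
    also have "(\<Sum>a\<in>{1..<N}. rr a p * X a) = (\<Sum>b\<in>{1..<N}. rr p b * X b)"
      using True rsym by (intro sum.cong) auto
    finally show ?thesis using True by (simp add: yl_def)
  next
    case False
    thus ?thesis by (auto simp: yl_def intro!: sum.neutral)
  qed
  ultimately show ?thesis by simp
qed


lemma Qf_pos: "qq X > 0 \<Longrightarrow> Qf X > 0"
  by (simp add: qq_Qf)

lemma d_qq:
  assumes q: "qq X > 0" and p: "p \<in> {1..N}"
  shows "((\<lambda>t. qq (LN X p t)) has_real_derivative kk X p) (at 0)"
proof -
  have Q: "Qf X > 0" using Qf_pos[OF q] .
  have "((\<lambda>t. sqrt (Qf (LN X p t))) has_real_derivative inverse (sqrt (Qf X)) / 2 * (2 * yl X p)) (at 0)"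
    using DERIV_chain2[OF DERIV_real_sqrt d_Qf[OF p], of X] Q by simp
  moreover have "inverse (sqrt (Qf X)) / 2 * (2 * yl X p) = kk X p"
    by (simp add: kk_def qq_Qf field_simps)
  ultimately show ?thesis by (simp add: qq_Qf)
qed

lemma ev_qq:
  assumes q: "qq X > 0" and p: "p \<in> {1..N}"
  shows "eventually (\<lambda>t. qq (LN X p t) > 0) (nhds 0)"
  using ev_pos[OF d_qq[OF q p]] q by simp

lemma d_Z:
  assumes p: "p \<in> {1..N}"
  shows "((\<lambda>t. LN X p t N) has_real_derivative ee p) (at 0)"
  using d_coord[of X p N] by (auto simp: ee_def)

lemma d_yl:
  assumes p: "p \<in> {1..N}"
  shows "((\<lambda>t. yl (LN X p t) a) has_real_derivative r0 a p) (at 0)"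
proof (cases "a \<in> {1..<N}")
  case True
  have "((\<lambda>t. \<Sum>b\<in>{1..<N}. rr a b * LN X p t b) has_real_derivative (\<Sum>b\<in>{1..<N}. rr a b * (if b = p then 1 else 0))) (at 0)"
    by (intro DERIV_sum DERIV_cmult d_coord)
  moreover have "(\<Sum>b\<in>{1..<N}. rr a b * (if b = p then 1 else 0)) = r0 a p"
    using True by (simp add: r0_def if_distrib sum.delta' cong: if_cong)
  ultimately show ?thesis using True by (simp add: yl_def)
next
  case False
  have "(\<lambda>t. yl (LN X p t) a) = (\<lambda>t. 0)" using False by (intro ext) (auto simp: yl_def)
  moreover have "r0 a p = 0" using False by (auto simp: r0_def)
  ultimately show ?thesis by simp
qed

lemma d_BB:
  assumes q: "qq X > 0" and p: "p \<in> {1..N}"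
  shows "((\<lambda>t. BB (LN X p t)) has_real_derivative
     2 * X N * ee p + g * (kk X p * X N + qq X * ee p) + 2 * qq X * kk X p) (at 0)"
proof -
  note Z = d_Z[OF p, of X] and Q = d_qq[OF q p]
  have "((\<lambda>t. (LN X p t N)^2 + g * qq (LN X p t) * LN X p t N + (qq (LN X p t))^2) has_real_derivative
     2 * X N * ee p + g * (kk X p * X N + qq X * ee p) + 2 * qq X * kk X p) (at 0)"
    apply (rule DERIV_eq)
     apply (rule DERIV_add[OF DERIV_add[OF DERIV_power[OF Z] DERIV_mult[OF DERIV_cmult[OF Q] Z]] DERIV_power[OF Q]])
    by (simp add: algebra_simps)
  thus ?thesis by (simp add: fB_def)
qed

lemma d_kk:
  assumes q: "qq X > 0" and p: "p \<in> {1..N}"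
  shows "((\<lambda>t. kk (LN X p t) a) has_real_derivative (r0 a p - kk X a * kk X p) / qq X) (at 0)"
proof -
  have "((\<lambda>t. yl (LN X p t) a / qq (LN X p t)) has_real_derivative (r0 a p * qq X - yl X a * kk X p) / (qq X * qq X)) (at 0)"
    using DERIV_divide[OF d_yl[OF p] d_qq[OF q p], of X a] q by simp
  moreover have "(r0 a p * qq X - yl X a * kk X p) / (qq X * qq X) = (r0 a p - kk X a * kk X p) / qq X"
    using q by (simp add: kk_def field_simps)
  ultimately show ?thesis by (simp add: kk_def)
qed

lemma PP_ev:
  assumes q: "qq X > 0" and p: "p \<in> {1..N}"
  shows "eventually (\<lambda>t. PP (LN X p t) = exp (fG g * arctan ((LN X p t N + g * qq (LN X p t) / 2) / (fh g * qq (LN X p t))))) (nhds 0)"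
  using ev_qq[OF q p] by (rule eventually_mono) (simp add: PP_def fPhi_def fA_def)

lemma d_PP:
  assumes q: "qq X > 0" and p: "p \<in> {1..N}"
  shows "((\<lambda>t. PP (LN X p t)) has_real_derivative PP X * g * mm X p) (at 0)"
proof -
  note Z = d_Z[OF p, of X] and Q = d_qq[OF q p]
  define h where "h = fh g"
  have h: "h > 0" "h^2 = 1 - g^2/4" using hpos hsq by (auto simp: h_def)
  define u where "u = (X N + g * qq X / 2) / (h * qq X)"
  define u' where "u' = ((ee p + g * kk X p / 2) * (h * qq X) - (X N + g * qq X / 2) * (h * kk X p)) / (h * qq X)^2"
  have du: "((\<lambda>t. (LN X p t N + g * qq (LN X p t) / 2) / (h * qq (LN X p t))) has_real_derivative u') (at 0)"
    unfolding u'_def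
    apply (rule DERIV_eq)
     apply (rule DERIV_divide[OF DERIV_add[OF Z DERIV_cdivide[OF DERIV_cmult[OF Q]]] DERIV_cmult[OF Q]])
    using h q by (auto simp: power2_eq_square)
  have da: "((\<lambda>t. exp (fG g * arctan ((LN X p t N + g * qq (LN X p t) / 2) / (h * qq (LN X p t))))) has_real_derivative
      exp (fG g * arctan u) * (fG g * (inverse (1 + u^2) * u'))) (at 0)"
    using DERIV_chain2[OF DERIV_exp DERIV_cmult[OF DERIV_chain2[OF DERIV_arctan du]], of "fG g"]
    by (simp add: u_def)
  have PX: "PP X = exp (fG g * arctan u)"
    using q by (simp add: PP_def fPhi_def fA_def u_def h_def)
  have B: "BB X = (X N + g * qq X / 2)^2 + h^2 * (qq X)^2" using BB_eq by (simp add: h_def)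
  have Bp: "BB X > 0" using BB_pos[OF q] .
  have "fG g * (inverse (1 + u^2) * u') = g * mm X p"
  proof -
    have "1 + u^2 = BB X / (h * qq X)^2" using h q unfolding u_def B by (simp add: field_simps power2_eq_square)
    hence "inverse (1 + u^2) = (h * qq X)^2 / BB X" by simp
    moreover have "u' = (qq X * ee p - X N * kk X p) / (h * qq X^2)"
      unfolding u'_def using h q by (simp add: field_simps power2_eq_square)
    moreover have "fG g * ((h * qq X)^2 / BB X * ((qq X * ee p - X N * kk X p) / (h * qq X^2))) = g * mm X p"
      using h q Bp unfolding fG_def h_def[symmetric] mm_def
      by (simp add: field_simps power2_eq_square)
    ultimately show ?thesis by simp
  qed
  hence "((\<lambda>t. exp (fG g * arctan ((LN X p t N + g * qq (LN X p t) / 2) / (h * qq (LN X p t))))) has_real_derivative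
      PP X * g * mm X p) (at 0)" using da PX by (simp add: mult.assoc)
  thus ?thesis
    by (subst DERIV_cong_ev[OF refl PP_ev[OF q p] refl]) (simp add: h_def)
qed

definition R1 where "R1 X j = PP X * (yl X j + (X N + g * qq X) * ee j)"
definition G2 where "G2 X p j = PP X * (r0 j p + (ee p + g * kk X p) * ee j + g * mm X p * (yl X j + (X N + g * qq X) * ee j))"
definition rho where "rho X a b = r0 a b - kk X a * kk X b"
definition C3 where "C3 X p j r = g/2 * PP X * (rho X p j * mm X r + rho X p r * mm X j + rho X j r * mm X p + 2 * BB X * mm X p * mm X j * mm X r)"

lemma r0_sym: "r0 a b = r0 b a" using rsym by (auto simp: r0_def)

lemma yl_kk: "qq X > 0 \<Longrightarrow> yl X j = qq X * kk X j" by (simp add: kk_def)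

lemma BB_nonneg: "BB X \<ge> 0" unfolding BB_eq by simp

lemma fK2_eq: "fK2 N rr g X = PP X * BB X"
proof -
  have "exp (fG g * fPhi N rr g X / 2)^2 = exp (fG g * fPhi N rr g X)"
    by (simp add: power2_eq_square exp_add[symmetric])
  thus ?thesis using BB_nonneg[of X]
    by (simp add: fK2_def fK_def fJ_def PP_def power_mult_distrib)
qed

lemma pd_LN: "pd f p X = deriv (\<lambda>t. f (LN X p t)) 0" by (simp add: pd_def LN_def)

lemma d_fK2:
  assumes q: "qq X > 0" and p: "p \<in> {1..N}"
  shows "((\<lambda>t. fK2 N rr g (LN X p t)) has_real_derivative 2 * R1 X p) (at 0)"
proof -
  have Bp: "BB X > 0" using BB_pos[OF q] .
  have "((\<lambda>t. PP (LN X p t) * BB (LN X p t)) has_real_derivative 2 * R1 X p) (at 0)"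
    apply (rule DERIV_eq)
     apply (rule DERIV_mult[OF d_PP[OF q p] d_BB[OF q p]])
    using q Bp by (simp add: R1_def mm_def yl_kk field_simps)
  thus ?thesis by (simp add: fK2_eq)
qed

lemma pd_fK2: "qq X > 0 \<Longrightarrow> p \<in> {1..N} \<Longrightarrow> pd (fK2 N rr g) p X = 2 * R1 X p"
  unfolding pd_LN by (rule DERIV_imp_deriv[OF d_fK2])

lemma Rlow_eq: "qq X > 0 \<Longrightarrow> p \<in> {1..N} \<Longrightarrow> Rlow N rr g p X = R1 X p"
  by (simp add: Rlow_def pd_fK2)

lemma d_pdK2:
  assumes q: "qq X > 0" and p: "p \<in> {1..N}" and j: "j \<in> {1..N}"
  shows "((\<lambda>t. pd (fK2 N rr g) j (LN X p t)) has_real_derivative 2 * G2 X p j) (at 0)"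
proof -
  have ev: "eventually (\<lambda>t. pd (fK2 N rr g) j (LN X p t) = 2 * R1 (LN X p t) j) (nhds 0)"
    using ev_qq[OF q p] by (rule eventually_mono) (rule pd_fK2[OF _ j])
  have "((\<lambda>t. 2 * (PP (LN X p t) * (yl (LN X p t) j + (LN X p t N + g * qq (LN X p t)) * ee j))) has_real_derivative 2 * G2 X p j) (at 0)"
    apply (rule DERIV_eq)
     apply (rule DERIV_cmult[OF DERIV_mult[OF d_PP[OF q p] DERIV_add[OF d_yl[OF p] DERIV_mult[OF DERIV_add[OF d_Z[OF p] DERIV_cmult[OF d_qq[OF q p]]] DERIV_const]]]])
    by (simp add: G2_def algebra_simps)
  hence "((\<lambda>t. 2 * R1 (LN X p t) j) has_real_derivative 2 * G2 X p j) (at 0)"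
    by (simp add: R1_def)
  thus ?thesis by (subst DERIV_cong_ev[OF refl ev refl])
qed

lemma gmet_eq: "qq X > 0 \<Longrightarrow> p \<in> {1..N} \<Longrightarrow> j \<in> {1..N} \<Longrightarrow> gmet N rr g p j X = G2 X p j"
  unfolding gmet_def pd_LN[of "\<lambda>X. pd (fK2 N rr g) j X"] using DERIV_imp_deriv[OF d_pdK2] by simp

lemma d_mm:
  assumes q: "qq X > 0" and r: "r \<in> {1..N}"
  shows "((\<lambda>t. mm (LN X r t) p) has_real_derivative
     ((kk X r * ee p - (ee r * kk X p + X N * ((r0 p r - kk X p * kk X r) / qq X))) * BB X
        - (qq X * ee p - X N * kk X p) * (2 * X N * ee r + g * (kk X r * X N + qq X * ee r) + 2 * qq X * kk X r)) / (BB X)^2) (at 0)"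
proof -
  have Bp: "BB X > 0" using BB_pos[OF q] .
  show ?thesis
    unfolding mm_def
    apply (rule DERIV_eq)
     apply (rule DERIV_divide[OF DERIV_diff[OF DERIV_mult[OF d_qq[OF q r] DERIV_const] DERIV_mult[OF d_Z[OF r] d_kk[OF q r]]] d_BB[OF q r]])
    using Bp by (simp_all add: power2_eq_square algebra_simps)
qed

lemma d_gmet:
  assumes q: "qq X > 0" and p: "p \<in> {1..N}" and j: "j \<in> {1..N}" and r: "r \<in> {1..N}"
  shows "((\<lambda>t. gmet N rr g p j (LN X r t)) has_real_derivative 2 * C3 X p j r) (at 0)"
proof -
  have Bp: "BB X > 0" using BB_pos[OF q] .
  have ev: "eventually (\<lambda>t. gmet N rr g p j (LN X r t) = G2 (LN X r t) p j) (nhds 0)"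
    using ev_qq[OF q r] by (rule eventually_mono) (rule gmet_eq[OF _ p j])
  have dW: "((\<lambda>t. r0 j p + (ee p + g * kk (LN X r t) p) * ee j + g * mm (LN X r t) p * (yl (LN X r t) j + (LN X r t N + g * qq (LN X r t)) * ee j))
     has_real_derivative
     g * ((r0 p r - kk X p * kk X r) / qq X) * ee j
     + g * (((kk X r * ee p - (ee r * kk X p + X N * ((r0 p r - kk X p * kk X r) / qq X))) * BB X
        - (qq X * ee p - X N * kk X p) * (2 * X N * ee r + g * (kk X r * X N + qq X * ee r) + 2 * qq X * kk X r)) / (BB X)^2)
        * (yl X j + (X N + g * qq X) * ee j)
     + g * mm X p * (r0 j r + (ee r + g * kk X r) * ee j)) (at 0)"
    apply (rule DERIV_eq)
     apply (rule DERIV_add[OF DERIV_add[OF DERIV_const DERIV_mult[OF DERIV_add[OF DERIV_const DERIV_cmult[OF d_kk[OF q r]]] DERIV_const]]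
          DERIV_mult[OF DERIV_cmult[OF d_mm[OF q r]] DERIV_add[OF d_yl[OF r] DERIV_mult[OF DERIV_add[OF d_Z[OF r] DERIV_cmult[OF d_qq[OF q r]]] DERIV_const]]]])
    by (simp add: algebra_simps)
  have "((\<lambda>t. G2 (LN X r t) p j) has_real_derivative 2 * C3 X p j r) (at 0)"
    unfolding G2_def
    apply (rule DERIV_eq)
     apply (rule DERIV_mult[OF d_PP[OF q r] dW])
    unfolding C3_def rho_def LN0
    apply (rule alg4[where dB = "2 * X N * ee r + g * (kk X r * X N + qq X * ee r) + 2 * qq X * kk X r"])
    using q Bp by (simp_all add: fB_def yl_kk mm_def r0_sym)
  thus ?thesis by (subst DERIV_cong_ev[OF refl ev refl])
qed

lemma Cartan_eq: "qq X > 0 \<Longrightarrow> p \<in> {1..N} \<Longrightarrow> j \<in> {1..N} \<Longrightarrow> r \<in> {1..N} \<Longrightarrow> Cartan N rr g p j r X = C3 X p j r"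
  unfolding Cartan_def pd_LN[of "\<lambda>X. gmet N rr g p j X"] using DERIV_imp_deriv[OF d_gmet] by simp
end

context fins begin

lemma N1: "N \<ge> 1" using N2 by simp

lemma sumI_split: "(\<Sum>q\<in>{1..N}. f q) = (\<Sum>q\<in>{1..<N}. f q) + f N"
proof -
  have "{1..N} = insert N {1..<N}" using N1 by auto
  thus ?thesis by (simp add: add.commute)
qed

lemma ee_lt: "q \<in> {1..<N} \<Longrightarrow> ee q = 0" by (auto simp: ee_def)

lemma s_ee: "(\<Sum>q\<in>{1..N}. ee q * v q) = v N"
  unfolding sumI_split by (simp add: ee_lt)

lemma s_ee': "(\<Sum>q\<in>{1..N}. v q * ee q) = v N"
  unfolding sumI_split by (simp add: ee_lt)

lemma r0_N: "r0 N p = 0" "r0 p N = 0" by (auto simp: r0_def)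

lemma s_r0: "(\<Sum>q\<in>{1..N}. r0 q p * v q) = yl v p"
proof -
  have "(\<Sum>q\<in>{1..N}. r0 q p * v q) = (\<Sum>q\<in>{1..<N}. r0 q p * v q)"
    unfolding sumI_split by (simp add: r0_N)
  also have "\<dots> = yl v p"
    using rsym by (auto simp: r0_def yl_def intro!: sum.cong)
  finally show ?thesis .
qed

lemma s_bil: "(\<Sum>p\<in>{1..N}. u p * yl v p) = (\<Sum>a\<in>{1..<N}. \<Sum>b\<in>{1..<N}. rr a b * u a * v b)"
proof -
  have "(\<Sum>p\<in>{1..N}. u p * yl v p) = (\<Sum>p\<in>{1..<N}. u p * yl v p)"
    unfolding sumI_split by simp
  also have "\<dots> = (\<Sum>a\<in>{1..<N}. \<Sum>b\<in>{1..<N}. rr a b * u a * v b)"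
    by (auto simp: yl_def sum_distrib_left algebra_simps intro!: sum.cong)
  finally show ?thesis .
qed

lemma bil_sym: "(\<Sum>a\<in>{1..<N}. \<Sum>b\<in>{1..<N}. rr a b * u a * v b) = (\<Sum>a\<in>{1..<N}. \<Sum>b\<in>{1..<N}. rr a b * v a * u b)"
  apply (subst sum.swap)
  using rsym by (auto simp: algebra_simps intro!: sum.cong)

lemma s_yl_swap: "(\<Sum>p\<in>{1..N}. u p * yl v p) = (\<Sum>p\<in>{1..N}. v p * yl u p)"
  unfolding s_bil using bil_sym by simp

lemma s_ylX: "(\<Sum>p\<in>{1..N}. X p * yl X p) = Qf X"
  unfolding s_bil Qf_def by (simp add: algebra_simps)

lemma Qf_qq: "qq X > 0 \<Longrightarrow> Qf X = (qq X)^2"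
  by (metis Qf_pos less_eq_real_def qq_Qf real_sqrt_pow2)

lemma s_kkX: "qq X > 0 \<Longrightarrow> (\<Sum>p\<in>{1..N}. X p * kk X p) = qq X"
proof -
  assume q: "qq X > 0"
  have "(\<Sum>p\<in>{1..N}. X p * kk X p) = (\<Sum>p\<in>{1..N}. X p * yl X p) / qq X"
    by (simp add: kk_def sum_divide_distrib)
  also have "\<dots> = qq X" using q s_ylX[of X] Qf_qq[OF q] by (simp add: power2_eq_square)
  finally show ?thesis .
qed

lemma sG:
  assumes q: "qq X > 0"
  shows "(\<Sum>j\<in>{1..N}. G2 X p j * v j) = PP X * (yl v p + (ee p + g * kk X p) * v N
           + g * mm X p * ((\<Sum>j\<in>{1..N}. v j * yl X j) + (X N + g * qq X) * v N))"
proof -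
  have pt: "\<And>j. G2 X p j * v j = PP X * (r0 j p * v j) + PP X * (ee p + g * kk X p) * (ee j * v j)
     + PP X * g * mm X p * (v j * yl X j) + PP X * g * mm X p * (X N + g * qq X) * (ee j * v j)"
    by (simp add: G2_def algebra_simps)
  show ?thesis
    unfolding pt sum.distrib sum_distrib_left[symmetric] s_r0 s_ee
    by (simp add: algebra_simps)
qed


lemma algh:
  fixes P gg Z q ea eb ka kb rab B ma mb :: real
  assumes q: "q \<noteq> 0" and B: "B = Z^2 + gg*q*Z + q^2" and Bn: "B \<noteq> 0" and P: "P \<noteq> 0"
    and "ma = (q*ea - Z*ka)/B" and "mb = (q*eb - Z*kb)/B"
  shows "P * (rab + (ea + gg * ka) * eb + gg * ma * (q * kb + (Z + gg * q) * eb))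
     - P * (q * ka + (Z + gg * q) * ea) * (P * (q * kb + (Z + gg * q) * eb)) / (P * B)
     = P * (rab - ka * kb + B * ma * mb)"
  unfolding assms(5-)
  using q Bn P apply (simp add: field_simps power2_eq_square)
  using B unfolding power2_eq_square by Groebner_Basis.algebra

lemma PP_pos: "PP X > 0" by (simp add: PP_def)

lemma h_form:
  assumes q: "qq X > 0"
  shows "G2 X a b - R1 X a * R1 X b / (PP X * BB X) = PP X * (rho X a b + BB X * mm X a * mm X b)"
proof -
  have "G2 X a b - R1 X a * R1 X b / (PP X * BB X) = PP X * (r0 b a - kk X a * kk X b + BB X * mm X a * mm X b)"
    unfolding G2_def R1_def yl_kk[OF q]
    by (rule algh) (use q BB_pos[OF q] PP_pos[of X] in \<open>simp_all add: fB_def mm_def\<close>)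
  thus ?thesis by (simp add: rho_def r0_sym[of b a])
qed

lemma G2_sym:
  assumes q: "qq X > 0"
  shows "G2 X p j = G2 X j p"
proof -
  have "G2 X p j = R1 X p * R1 X j / (PP X * BB X) + PP X * (rho X p j + BB X * mm X p * mm X j)"
    using h_form[OF q, of p j] by (simp add: algebra_simps)
  also have "\<dots> = G2 X j p"
    using h_form[OF q, of j p] by (simp add: algebra_simps rho_def r0_sym[of p j])
  finally show ?thesis .
qed

lemma G2_X:
  assumes q: "qq X > 0"
  shows "(\<Sum>j\<in>{1..N}. G2 X p j * X j) = R1 X p"
proof -
  have "(\<Sum>j\<in>{1..N}. X j * yl X j) = (qq X)^2" using s_ylX[of X] Qf_qq[OF q] by simp
  thus ?thesis unfolding sG[OF q] R1_def mm_def using q BB_pos[OF q]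
    by (simp add: fB_def yl_kk field_simps power2_eq_square)
qed

lemma yl_ee: "yl ee p = 0" by (auto simp: yl_def ee_lt)

lemma G2_ee:
  assumes q: "qq X > 0"
  shows "(\<Sum>j\<in>{1..N}. G2 X p j * ee j) = PP X * (ee p + g * kk X p + g * mm X p * (X N + g * qq X))"
proof -
  have "(\<Sum>j\<in>{1..N}. ee j * yl X j) = 0" using s_ee[of "yl X"] by simp
  thus ?thesis unfolding sG[OF q] by (simp add: yl_ee)
qed

lemma sum_lin2: "(\<Sum>t\<in>S. (a * f t - b * h t) / c) = (a * sum f S - b * sum h S) / (c::real)"
  by (simp only: sum_divide_distrib[symmetric] sum_subtractf sum_distrib_left[symmetric])

lemma sum_lin1: "(\<Sum>t\<in>S. (f t - b * h t) / c) = (sum f S - b * sum h S) / (c::real)"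
  by (simp only: sum_divide_distrib[symmetric] sum_subtractf sum_distrib_left[symmetric])

lemma algmu:
  fixes P gg Z q ep kp B mp :: real
  assumes q: "q \<noteq> 0" and B: "B = Z^2 + gg*q*Z + q^2" and Bn: "B \<noteq> 0" and P: "P \<noteq> 0"
    and m: "mp = (q*ep - Z*kp)/B"
  shows "(P * (ep + gg * kp + gg * mp * (Z + gg * q)) - (Z + gg * q) / B * (P * (q * kp + (Z + gg * q) * ep))) / (P * q) = mp"
  unfolding m
  using q Bn P apply (simp add: field_simps power2_eq_square)
  using B unfolding power2_eq_square by Groebner_Basis.algebra

definition mu where "mu X j = (ee j - (X N + g * qq X) / BB X * X j) / (PP X * qq X)"

lemma G2_mu:
  assumes q: "qq X > 0"
  shows "(\<Sum>j\<in>{1..N}. G2 X p j * mu X j) = mm X p"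
proof -
  have "(\<Sum>j\<in>{1..N}. G2 X p j * mu X j) =
     ((\<Sum>j\<in>{1..N}. G2 X p j * ee j) - (X N + g * qq X) / BB X * (\<Sum>j\<in>{1..N}. G2 X p j * X j)) / (PP X * qq X)"
  proof -
    have pt: "\<And>j. G2 X p j * mu X j = ((G2 X p j * ee j) - ((X N + g * qq X) / BB X) * (G2 X p j * X j)) / (PP X * qq X)"
      by (simp add: mu_def algebra_simps diff_divide_distrib)
    show ?thesis by (subst sum.cong[OF refl pt]) (rule sum_lin1)
  qed
  also have "\<dots> = mm X p"
    unfolding G2_ee[OF q] G2_X[OF q] R1_def yl_kk[OF q]
    by (rule algmu) (use q BB_pos[OF q] PP_pos[of X] in \<open>simp_all add: fB_def mm_def\<close>)
  finally show ?thesis .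
qed

lemma s_R1X:
  assumes q: "qq X > 0"
  shows "(\<Sum>t\<in>{1..N}. R1 X t * X t) = PP X * BB X"
proof -
  have "(\<Sum>t\<in>{1..N}. R1 X t * X t) = PP X * ((\<Sum>t\<in>{1..N}. X t * yl X t) + (X N + g * qq X) * (\<Sum>t\<in>{1..N}. ee t * X t))"
    unfolding R1_def by (simp add: sum_distrib_left sum.distrib algebra_simps)
  also have "\<dots> = PP X * BB X"
    unfolding s_ee s_ylX Qf_qq[OF q] by (simp add: fB_def power2_eq_square algebra_simps)
  finally show ?thesis .
qed

lemma s_mmX:
  assumes q: "qq X > 0"
  shows "(\<Sum>t\<in>{1..N}. mm X t * X t) = 0"
proof -
  have "(\<Sum>t\<in>{1..N}. mm X t * X t) = (qq X * (\<Sum>t\<in>{1..N}. ee t * X t) - X N * (\<Sum>t\<in>{1..N}. X t * kk X t)) / BB X"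
  proof -
    have pt: "\<And>t. mm X t * X t = (qq X * (ee t * X t) - X N * (X t * kk X t)) / BB X"
      by (simp add: mm_def algebra_simps diff_divide_distrib)
    show ?thesis by (subst sum.cong[OF refl pt]) (rule sum_lin2)
  qed
  also have "\<dots> = 0" unfolding s_ee s_kkX[OF q] by simp
  finally show ?thesis .
qed

lemma s_mu_mm:
  assumes q: "qq X > 0"
  shows "(\<Sum>t\<in>{1..N}. mu X t * mm X t) = 1 / (PP X * BB X)"
proof -
  have "(\<Sum>t\<in>{1..N}. mu X t * mm X t) = ((\<Sum>t\<in>{1..N}. ee t * mm X t) - (X N + g * qq X) / BB X * (\<Sum>t\<in>{1..N}. mm X t * X t)) / (PP X * qq X)"
  proof -
    have pt: "\<And>t. mu X t * mm X t = ((ee t * mm X t) - ((X N + g * qq X) / BB X) * (mm X t * X t)) / (PP X * qq X)"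
      by (simp add: mu_def algebra_simps diff_divide_distrib)
    show ?thesis by (subst sum.cong[OF refl pt]) (rule sum_lin1)
  qed
  also have "\<dots> = 1 / (PP X * BB X)"
    unfolding s_ee s_mmX[OF q] using q BB_pos[OF q] PP_pos[of X] by (simp add: mm_def)
  finally show ?thesis .
qed

lemma s_R1mu:
  assumes q: "qq X > 0"
  shows "(\<Sum>t\<in>{1..N}. R1 X t * mu X t) = 0"
proof -
  have "(\<Sum>t\<in>{1..N}. R1 X t * mu X t) = ((\<Sum>t\<in>{1..N}. ee t * R1 X t) - (X N + g * qq X) / BB X * (\<Sum>t\<in>{1..N}. R1 X t * X t)) / (PP X * qq X)"
  proof -
    have pt: "\<And>t. R1 X t * mu X t = ((ee t * R1 X t) - ((X N + g * qq X) / BB X) * (R1 X t * X t)) / (PP X * qq X)"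
      by (simp add: mu_def algebra_simps diff_divide_distrib)
    show ?thesis by (subst sum.cong[OF refl pt]) (rule sum_lin1)
  qed
  also have "\<dots> = 0"
    unfolding s_ee s_R1X[OF q] using q BB_pos[OF q] PP_pos[of X] by (simp add: R1_def)
  finally show ?thesis .
qed
end

lemma sum_shift1: "(\<Sum>q\<in>{1..n}. f q) = (\<Sum>k\<in>{0..<n}. f (Suc k))"
  by (rule sum.reindex_bij_witness[of _ Suc "\<lambda>q. q - 1"]) auto

lemma inverse_exists:
  fixes Gf :: "nat \<Rightarrow> nat \<Rightarrow> real"
  assumes inj: "\<And>v. (\<forall>p\<in>{1..n}. (\<Sum>q\<in>{1..n}. Gf p q * v q) = 0) \<Longrightarrow> (\<forall>q\<in>{1..n}. v q = 0)"
  shows "\<exists>E. (\<forall>p\<in>{1..n}. \<forall>s\<in>{1..n}. (\<Sum>q\<in>{1..n}. Gf p q * E q s) = (if p = s then 1 else 0))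
           \<and> (\<forall>p\<in>{1..n}. \<forall>s\<in>{1..n}. (\<Sum>q\<in>{1..n}. E p q * Gf q s) = (if p = s then 1 else 0))
           \<and> (\<forall>p q. p \<notin> {1..n} \<or> q \<notin> {1..n} \<longrightarrow> E p q = 0)"
proof -
  define A where "A = mat n n (\<lambda>(i,j). Gf (Suc i) (Suc j))"
  have A: "A \<in> carrier_mat n n" by (simp add: A_def)
  have "det A \<noteq> 0"
  proof
    assume "det A = 0"
    then obtain v where v: "v \<in> carrier_vec n" "v \<noteq> 0\<^sub>v n" "A *\<^sub>v v = 0\<^sub>v n"
      using det_0_iff_vec_prod_zero[OF A] by auto
    define w where "w q = (if q \<in> {1..n} then v $ (q - 1) else 0)" for q
    have "\<forall>p\<in>{1..n}. (\<Sum>q\<in>{1..n}. Gf p q * w q) = 0"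
    proof
      fix p assume p: "p \<in> {1..n}"
      have "(\<Sum>q\<in>{1..n}. Gf p q * w q) = (\<Sum>k\<in>{0..<n}. Gf p (Suc k) * v $ k)"
        unfolding sum_shift1 by (simp add: w_def)
      also have "\<dots> = (A *\<^sub>v v) $ (p - 1)"
      proof -
        have pn: "p - 1 < n" "Suc (p - 1) = p" using p by auto
        show ?thesis using v(1) pn by (auto simp: A_def scalar_prod_def row_def intro!: sum.cong)
      qed
      also have "\<dots> = 0" using v(3) p by (simp add: zero_vec_def) (subst index_vec, auto)
      finally show "(\<Sum>q\<in>{1..n}. Gf p q * w q) = 0" .
    qed
    hence "\<forall>q\<in>{1..n}. w q = 0" by (rule inj)
    hence "v = 0\<^sub>v n"
    proof (intro eq_vecI)
      fix i assume "\<forall>q\<in>{1..n}. w q = 0" "i < dim_vec (0\<^sub>v n :: real vec)"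
      hence "w (Suc i) = 0" by simp
      thus "v $ i = 0\<^sub>v n $ i" using \<open>i < dim_vec (0\<^sub>v n :: real vec)\<close> by (simp add: w_def)
    qed (use v(1) in simp)
    with v(2) show False by simp
  qed
  hence "A \<in> Units (ring_mat TYPE(real) n undefined)" by (rule det_non_zero_imp_unit[OF A])
  then obtain B where B: "B \<in> carrier_mat n n" "B * A = 1\<^sub>m n" "A * B = 1\<^sub>m n"
    by (auto simp: Units_def ring_mat_def)
  define E where "E p q = (if p \<in> {1..n} \<and> q \<in> {1..n} then B $$ (p - 1, q - 1) else 0)" for p q
  have 1: "(\<Sum>q\<in>{1..n}. Gf p q * E q s) = (if p = s then 1 else 0)" if p: "p \<in> {1..n}" and s: "s \<in> {1..n}" for p s
  proof -
    have "(\<Sum>q\<in>{1..n}. Gf p q * E q s) = (A * B) $$ (p - 1, s - 1)"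
    proof -
      have pn: "p - 1 < n" "Suc (p - 1) = p" "s - 1 < n" "Suc (s - 1) = s" using p s by auto
      show ?thesis unfolding sum_shift1 using B(1) pn by (auto simp: E_def A_def scalar_prod_def row_def col_def intro!: sum.cong)
    qed
    also have "\<dots> = (if p = s then 1 else 0)" using B(3) p s by auto
    finally show ?thesis .
  qed
  have 2: "(\<Sum>q\<in>{1..n}. E p q * Gf q s) = (if p = s then 1 else 0)" if p: "p \<in> {1..n}" and s: "s \<in> {1..n}" for p s
  proof -
    have "(\<Sum>q\<in>{1..n}. E p q * Gf q s) = (B * A) $$ (p - 1, s - 1)"
    proof -
      have pn: "p - 1 < n" "Suc (p - 1) = p" "s - 1 < n" "Suc (s - 1) = s" using p s by auto
      show ?thesis unfolding sum_shift1 using B(1) pn by (auto simp: E_def A_def scalar_prod_def row_def col_def intro!: sum.cong)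
    qed
    also have "\<dots> = (if p = s then 1 else 0)" using B(2) p s by auto
    finally show ?thesis .
  qed
  show ?thesis by (rule exI[of _ E]) (use 1 2 in \<open>auto simp: E_def\<close>)
qed

lemma sum_delta_r: "finite I \<Longrightarrow> s \<in> I \<Longrightarrow> (\<Sum>t\<in>I. f t * (if t = s then 1 else 0)) = (f s :: real)"
  by (simp add: if_distrib sum.delta' cong: if_cong)

lemma curv_abstract:
  fixes I :: "nat set" and h E :: "nat \<Rightarrow> nat \<Rightarrow> real" and m mu X Rl :: "nat \<Rightarrow> real"
    and al be w K2 :: real and Cf :: "nat \<Rightarrow> nat \<Rightarrow> nat \<Rightarrow> real"
  assumes fin: "finite I"
    and hsym: "\<forall>a\<in>I. \<forall>b\<in>I. h a b = h b a"
    and Eh: "\<forall>t\<in>I. \<forall>s\<in>I. (\<Sum>u\<in>I. E t u * h u s) = (if t = s then 1 else 0) - X t * Rl s / K2"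
    and Em: "\<forall>t\<in>I. (\<Sum>u\<in>I. E t u * m u) = mu t"
    and hmu: "\<forall>s\<in>I. (\<Sum>t\<in>I. mu t * h t s) = m s"
    and hX: "\<forall>s\<in>I. (\<Sum>t\<in>I. X t * h t s) = 0"
    and mX: "(\<Sum>t\<in>I. m t * X t) = 0"
    and w: "w = (\<Sum>t\<in>I. mu t * m t)"
    and ab: "al + be * w = 0"
    and C: "\<forall>p\<in>I. \<forall>q\<in>I. \<forall>r\<in>I. Cf p q r = al * (m p * h q r + m q * h p r + m r * h p q) + be * m p * m q * m r"
  shows "\<forall>p\<in>I. \<forall>q\<in>I. \<forall>r\<in>I. \<forall>s\<in>I.
     (\<Sum>t\<in>I. Cf t q r * (\<Sum>u\<in>I. E t u * Cf p u s) - Cf t q s * (\<Sum>u\<in>I. E t u * Cf p u r))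
       = - (al^2) * w * (h p r * h q s - h p s * h q r)"
proof (intro ballI)
  have Cm: "(\<Sum>u\<in>I. E t u * Cf p u s) = al * m p * ((if t = s then 1 else 0) - X t * Rl s / K2)
      + al * h p s * mu t + al * m s * ((if t = p then 1 else 0) - X t * Rl p / K2) + be * m p * m s * mu t"
    if t: "t \<in> I" and p: "p \<in> I" and s: "s \<in> I" for t p s
  proof -
    have "(\<Sum>u\<in>I. E t u * Cf p u s) = (\<Sum>u\<in>I. al * m p * (E t u * h u s) + al * h p s * (E t u * m u)
        + al * m s * (E t u * h u p) + be * m p * m s * (E t u * m u))"
    proof (rule sum.cong[OF refl])
      fix u assume u: "u \<in> I"
      show "E t u * Cf p u s = al * m p * (E t u * h u s) + al * h p s * (E t u * m u)
        + al * m s * (E t u * h u p) + be * m p * m s * (E t u * m u)"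
        using C p u s hsym by (simp add: algebra_simps)
    qed
    also have "\<dots> = al * m p * (\<Sum>u\<in>I. E t u * h u s) + al * h p s * (\<Sum>u\<in>I. E t u * m u)
        + al * m s * (\<Sum>u\<in>I. E t u * h u p) + be * m p * m s * (\<Sum>u\<in>I. E t u * m u)"
      by (simp add: sum.distrib sum_distrib_left)
    finally show ?thesis using Eh Em t p s by simp
  qed
  have sX: "(\<Sum>t\<in>I. Cf t q r * X t) = 0" if q: "q \<in> I" and r: "r \<in> I" for q r
  proof -
    have "(\<Sum>t\<in>I. Cf t q r * X t) = (\<Sum>t\<in>I. al * h q r * (m t * X t) + al * m q * (X t * h t r) + al * m r * (X t * h t q) + be * m q * m r * (m t * X t))"
      using C q r by (intro sum.cong) (auto simp: algebra_simps)
    also have "\<dots> = al * h q r * (\<Sum>t\<in>I. m t * X t) + al * m q * (\<Sum>t\<in>I. X t * h t r) + al * m r * (\<Sum>t\<in>I. X t * h t q) + be * m q * m r * (\<Sum>t\<in>I. m t * X t)"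
      by (simp add: sum.distrib sum_distrib_left)
    finally show ?thesis using mX hX q r by simp
  qed
  have smu: "(\<Sum>t\<in>I. Cf t q r * mu t) = al * (w * h q r + 2 * m q * m r) + be * w * m q * m r" if q: "q \<in> I" and r: "r \<in> I" for q r
  proof -
    have "(\<Sum>t\<in>I. Cf t q r * mu t) = (\<Sum>t\<in>I. al * h q r * (mu t * m t) + al * m q * (mu t * h t r) + al * m r * (mu t * h t q) + be * m q * m r * (mu t * m t))"
      using C q r by (intro sum.cong) (auto simp: algebra_simps)
    also have "\<dots> = al * h q r * (\<Sum>t\<in>I. mu t * m t) + al * m q * (\<Sum>t\<in>I. mu t * h t r) + al * m r * (\<Sum>t\<in>I. mu t * h t q) + be * m q * m r * (\<Sum>t\<in>I. mu t * m t)"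
      by (simp add: sum.distrib sum_distrib_left)
    finally show ?thesis using hmu q r w by (simp add: algebra_simps)
  qed
  have T: "(\<Sum>t\<in>I. Cf t q r * (\<Sum>u\<in>I. E t u * Cf p u s)) =
      al * m p * Cf s q r + al * h p s * (al * (w * h q r + 2 * m q * m r) + be * w * m q * m r)
      + al * m s * Cf p q r + be * m p * m s * (al * (w * h q r + 2 * m q * m r) + be * w * m q * m r)"
    if p: "p \<in> I" and q: "q \<in> I" and r: "r \<in> I" and s: "s \<in> I" for p q r s
  proof -
    have "(\<Sum>t\<in>I. Cf t q r * (\<Sum>u\<in>I. E t u * Cf p u s)) =
       (\<Sum>t\<in>I. al * m p * (Cf t q r * (if t = s then 1 else 0)) - al * m p * Rl s / K2 * (Cf t q r * X t)
         + al * h p s * (Cf t q r * mu t) + al * m s * (Cf t q r * (if t = p then 1 else 0))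
         - al * m s * Rl p / K2 * (Cf t q r * X t) + be * m p * m s * (Cf t q r * mu t))"
    proof (rule sum.cong[OF refl])
      fix t assume t: "t \<in> I"
      show "Cf t q r * (\<Sum>u\<in>I. E t u * Cf p u s) = al * m p * (Cf t q r * (if t = s then 1 else 0)) - al * m p * Rl s / K2 * (Cf t q r * X t)
         + al * h p s * (Cf t q r * mu t) + al * m s * (Cf t q r * (if t = p then 1 else 0))
         - al * m s * Rl p / K2 * (Cf t q r * X t) + be * m p * m s * (Cf t q r * mu t)"
        unfolding Cm[OF t p s] by (simp add: algebra_simps)
    qed
    also have "\<dots> = al * m p * (\<Sum>t\<in>I. Cf t q r * (if t = s then 1 else 0)) - al * m p * Rl s / K2 * (\<Sum>t\<in>I. Cf t q r * X t)
         + al * h p s * (\<Sum>t\<in>I. Cf t q r * mu t) + al * m s * (\<Sum>t\<in>I. Cf t q r * (if t = p then 1 else 0))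
         - al * m s * Rl p / K2 * (\<Sum>t\<in>I. Cf t q r * X t) + be * m p * m s * (\<Sum>t\<in>I. Cf t q r * mu t)"
      by (simp only: sum.distrib sum_subtractf sum_distrib_left)
    also have "\<dots> = al * m p * Cf s q r + al * h p s * (al * (w * h q r + 2 * m q * m r) + be * w * m q * m r)
      + al * m s * Cf p q r + be * m p * m s * (al * (w * h q r + 2 * m q * m r) + be * w * m q * m r)"
      unfolding sum_delta_r[OF fin s] sum_delta_r[OF fin p] sX[OF q r] smu[OF q r] by simp
    finally show ?thesis .
  qed
  fix p q r s assume p: "p \<in> I" and q: "q \<in> I" and r: "r \<in> I" and s: "s \<in> I"
  have "(\<Sum>t\<in>I. Cf t q r * (\<Sum>u\<in>I. E t u * Cf p u s) - Cf t q s * (\<Sum>u\<in>I. E t u * Cf p u r))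
     = (\<Sum>t\<in>I. Cf t q r * (\<Sum>u\<in>I. E t u * Cf p u s)) - (\<Sum>t\<in>I. Cf t q s * (\<Sum>u\<in>I. E t u * Cf p u r))"
    by (simp add: sum_subtractf)
  also have "\<dots> = - (al^2) * w * (h p r * h q s - h p s * h q r)"
  proof -
    have c: "Cf s q r = al * (m s * h q r + m q * h s r + m r * h s q) + be * m s * m q * m r"
       "Cf p q r = al * (m p * h q r + m q * h p r + m r * h p q) + be * m p * m q * m r"
       "Cf r q s = al * (m r * h q s + m q * h r s + m s * h r q) + be * m r * m q * m s"
       "Cf p q s = al * (m p * h q s + m q * h p s + m s * h p q) + be * m p * m q * m s"
      using C p q r s by auto
    have hs: "h s r = h r s" "h s q = h q s" "h r q = h q r" "h p q = h q p"
      using hsym p q r s by auto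
    have a: "al = - be * w" using ab by simp
    show ?thesis unfolding T[OF p q r s] T[OF p q s r] c hs a
      by (simp add: power2_eq_square algebra_simps)
  qed
  finally show "(\<Sum>t\<in>I. Cf t q r * (\<Sum>u\<in>I. E t u * Cf p u s) - Cf t q s * (\<Sum>u\<in>I. E t u * Cf p u r))
       = - (al^2) * w * (h p r * h q s - h p s * h q r)" .
qed

lemma lin2:
  fixes a S B Z gg q :: real
  assumes B: "B = Z^2 + gg*q*Z + q^2" and Bn: "B \<noteq> 0" and q: "q \<noteq> 0"
    and e1: "a*B + gg*q*(S + (Z + gg*q)*a) = 0"
    and e2: "S*B + q*(gg*a*B - gg*Z*(S + (Z + gg*q)*a)) = 0"
  shows "a = 0 \<and> S = 0"
proof -
  have "a * B^2 = (Z^2 + q^2) * (a*B + gg*q*(S + (Z + gg*q)*a)) - gg*q*(S*B + q*(gg*a*B - gg*Z*(S + (Z + gg*q)*a)))"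
    unfolding B by (simp add: power2_eq_square algebra_simps)
  hence "a * B^2 = 0" using e1 e2 by simp
  hence a: "a = 0" using Bn by simp
  have "S * (Z^2 + q^2) = S*B + q*(gg*a*B - gg*Z*(S + (Z + gg*q)*a))"
    unfolding B a by (simp add: power2_eq_square algebra_simps)
  hence "S * (Z^2 + q^2) = 0" using e2 by simp
  moreover have "Z^2 + q^2 > 0" using q by (simp add: add_nonneg_pos)
  ultimately show ?thesis using a q by auto
qed

context fins begin

lemma G2_inj:
  assumes q: "qq X > 0" and v: "\<forall>p\<in>{1..N}. (\<Sum>j\<in>{1..N}. G2 X p j * v j) = 0"
  shows "\<forall>j\<in>{1..N}. v j = 0"
proof -
  define S where "S = (\<Sum>j\<in>{1..N}. v j * yl X j)"
  define Z where "Z = X N"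
  define c where "c = g * v N - g * Z * (S + (Z + g * qq X) * v N) / BB X"
  have Bp: "BB X > 0" using BB_pos[OF q] .
  have e: "yl v p + (ee p + g * kk X p) * v N + g * mm X p * (S + (Z + g * qq X) * v N) = 0"
    if p: "p \<in> {1..N}" for p
    using v p sG[OF q, of p v] PP_pos[of X] by (simp add: S_def Z_def)
  have N: "N \<in> {1..N}" using N1 by simp
  have eN: "v N + g * (qq X / BB X) * (S + (Z + g * qq X) * v N) = 0"
    using e[OF N] by (simp add: mm_def yl_def)
  have yv: "yl v p = - kk X p * c" if p: "p \<in> {1..N}" for p
  proof (cases "p = N")
    case True thus ?thesis by (simp add: yl_def)
  next
    case False
    hence "ee p = 0" by (simp add: ee_def)
    thus ?thesis using e[OF p] Bp unfolding c_def mm_def Z_def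
      by (simp add: field_simps)
  qed
  have "S = (\<Sum>p\<in>{1..N}. X p * yl v p)" unfolding S_def by (rule s_yl_swap[symmetric])
  also have "\<dots> = (\<Sum>p\<in>{1..N}. - c * (X p * kk X p))" by (rule sum.cong) (auto simp: yv)
  also have "\<dots> = - c * qq X" unfolding sum_distrib_left[symmetric] s_kkX[OF q] ..
  finally have eS: "S = - c * qq X" .
  have vS: "v N = 0 \<and> S = 0"
  proof (rule lin2[where B = "BB X" and Z = Z and gg = g and q = "qq X"])
    show "BB X = Z^2 + g * qq X * Z + (qq X)^2" by (simp add: fB_def Z_def)
    show "BB X \<noteq> 0" "qq X \<noteq> 0" using Bp q by auto
    show "v N * BB X + g * qq X * (S + (Z + g * qq X) * v N) = 0"
      using eN Bp by (simp add: field_simps)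
    show "S * BB X + qq X * (g * v N * BB X - g * Z * (S + (Z + g * qq X) * v N)) = 0"
      using eS Bp unfolding c_def by (simp add: field_simps)
  qed
  hence "c = 0" by (simp add: c_def)
  hence yl0: "yl v p = 0" if "p \<in> {1..N}" for p using yv[OF that] by simp
  have "(\<Sum>a\<in>{1..<N}. \<Sum>b\<in>{1..<N}. rr a b * v a * v b) = (\<Sum>p\<in>{1..N}. v p * yl v p)"
    by (rule s_bil[symmetric])
  also have "\<dots> = 0" using yl0 by simp
  finally have "\<not> (\<exists>a\<in>{1..<N}. v a \<noteq> 0)" using rpos by force
  thus ?thesis using vS by (auto simp: le_less)
qed

end

lemma swap3: "(\<Sum>u\<in>I. a u * (\<Sum>j\<in>J. b u j * c j)) = (\<Sum>j\<in>J. (\<Sum>u\<in>I. a u * b u j) * (c j :: real))"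
proof -
  have "(\<Sum>u\<in>I. a u * (\<Sum>j\<in>J. b u j * c j)) = (\<Sum>u\<in>I. \<Sum>j\<in>J. a u * (b u j * c j))"
    by (simp add: sum_distrib_left)
  also have "\<dots> = (\<Sum>j\<in>J. \<Sum>u\<in>I. a u * (b u j * c j))" by (rule sum.swap)
  also have "\<dots> = (\<Sum>j\<in>J. (\<Sum>u\<in>I. a u * b u j) * c j)"
    by (simp add: sum_distrib_right mult.assoc)
  finally show ?thesis .
qed

lemma sum_delta_l: "finite I \<Longrightarrow> p \<in> I \<Longrightarrow> (\<Sum>j\<in>I. (if p = j then 1 else 0) * f j) = (f p :: real)"
proof -
  assume "finite I" "p \<in> I"
  have "\<And>j. (if p = j then 1 else 0) * f j = (if p = j then f j else 0)" by simp
  thus ?thesis using \<open>finite I\<close> \<open>p \<in> I\<close> by (simp add: sum.delta)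
qed

context fins begin

lemma ginv_eq:
  assumes q: "qq X > 0"
  obtains E where "ginv N rr g X = E"
    and "\<forall>p\<in>{1..N}. \<forall>s\<in>{1..N}. (\<Sum>j\<in>{1..N}. G2 X p j * E j s) = (if p = s then 1 else 0)"
    and "\<forall>p\<in>{1..N}. \<forall>s\<in>{1..N}. (\<Sum>j\<in>{1..N}. E p j * G2 X j s) = (if p = s then 1 else 0)"
proof -
  have gm: "gmet N rr g p j X = G2 X p j" if "p \<in> {1..N}" "j \<in> {1..N}" for p j
    using gmet_eq[OF q that] .
  have "\<exists>E. (\<forall>p\<in>{1..N}. \<forall>s\<in>{1..N}. (\<Sum>q\<in>{1..N}. gmet N rr g p q X * E q s) = (if p = s then 1 else 0))
           \<and> (\<forall>p\<in>{1..N}. \<forall>s\<in>{1..N}. (\<Sum>q\<in>{1..N}. E p q * gmet N rr g q s X) = (if p = s then 1 else 0))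
           \<and> (\<forall>p q. p \<notin> {1..N} \<or> q \<notin> {1..N} \<longrightarrow> E p q = 0)"
  proof (rule inverse_exists)
    fix v assume "\<forall>p\<in>{1..N}. (\<Sum>q\<in>{1..N}. gmet N rr g p q X * v q) = 0"
    hence "\<forall>p\<in>{1..N}. (\<Sum>j\<in>{1..N}. G2 X p j * v j) = 0" by (simp add: gm)
    thus "\<forall>q\<in>{1..N}. v q = 0" by (rule G2_inj[OF q])
  qed
  then obtain E where E1: "\<forall>p\<in>{1..N}. \<forall>s\<in>{1..N}. (\<Sum>q\<in>{1..N}. gmet N rr g p q X * E q s) = (if p = s then 1 else 0)"
    and E2: "\<forall>p\<in>{1..N}. \<forall>s\<in>{1..N}. (\<Sum>q\<in>{1..N}. E p q * gmet N rr g q s X) = (if p = s then 1 else 0)"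
    and E3: "\<forall>p q. p \<notin> {1..N} \<or> q \<notin> {1..N} \<longrightarrow> E p q = 0" by blast
  have G1: "\<forall>p\<in>{1..N}. \<forall>s\<in>{1..N}. (\<Sum>j\<in>{1..N}. G2 X p j * E j s) = (if p = s then 1 else 0)"
    using E1 by (simp add: gm)
  have G2': "\<forall>p\<in>{1..N}. \<forall>s\<in>{1..N}. (\<Sum>j\<in>{1..N}. E p j * G2 X j s) = (if p = s then 1 else 0)"
    using E2 by (simp add: gm)
  have "ginv N rr g X = E"
    unfolding ginv_def
  proof (rule the_equality)
    show "(\<forall>p\<in>{1..N}. \<forall>s\<in>{1..N}. (\<Sum>q\<in>{1..N}. gmet N rr g p q X * E q s) = (if p = s then 1 else 0))
         \<and> (\<forall>p q. p \<notin> {1..N} \<or> q \<notin> {1..N} \<longrightarrow> E p q = 0)" using E1 E3 by blast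
  next
    fix M assume M: "(\<forall>p\<in>{1..N}. \<forall>s\<in>{1..N}. (\<Sum>q\<in>{1..N}. gmet N rr g p q X * M q s) = (if p = s then 1 else 0))
         \<and> (\<forall>p q. p \<notin> {1..N} \<or> q \<notin> {1..N} \<longrightarrow> M p q = 0)"
    show "M = E"
    proof (intro ext)
      fix p s
      show "M p s = E p s"
      proof (cases "p \<in> {1..N} \<and> s \<in> {1..N}")
        case True
        hence p: "p \<in> {1..N}" and s: "s \<in> {1..N}" by auto
        have "E p s = (\<Sum>u\<in>{1..N}. E p u * (if u = s then 1 else 0))"
          using s by (simp add: sum_delta_r)
        also have "\<dots> = (\<Sum>u\<in>{1..N}. E p u * (\<Sum>j\<in>{1..N}. G2 X u j * M j s))"
        proof (rule sum.cong[OF refl])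
          fix u assume u: "u \<in> {1..N}"
          have MG: "\<forall>p\<in>{1..N}. \<forall>s\<in>{1..N}. (\<Sum>j\<in>{1..N}. G2 X p j * M j s) = (if p = s then 1 else 0)"
            using M by (simp add: gm)
          show "E p u * (if u = s then 1 else 0) = E p u * (\<Sum>j\<in>{1..N}. G2 X u j * M j s)"
            using MG u s by simp
        qed
        also have "\<dots> = (\<Sum>j\<in>{1..N}. (\<Sum>u\<in>{1..N}. E p u * G2 X u j) * M j s)"
          by (rule swap3)
        also have "\<dots> = (\<Sum>j\<in>{1..N}. (if p = j then 1 else 0) * M j s)"
          using G2' p by (intro sum.cong) auto
        also have "\<dots> = M p s" using p by (simp only: sum_delta_l[OF finite_atLeastAtMost])
        finally show ?thesis by simp
      next
        case False thus ?thesis using M E3 by auto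
      qed
    qed
  qed
  thus ?thesis using that G1 G2' by blast
qed

lemma E_apply:
  assumes q: "qq X > 0" and t: "t \<in> {1..N}"
    and E2: "\<forall>p\<in>{1..N}. \<forall>s\<in>{1..N}. (\<Sum>j\<in>{1..N}. E p j * G2 X j s) = (if p = s then 1 else 0)"
  shows "(\<Sum>u\<in>{1..N}. E t u * (\<Sum>j\<in>{1..N}. G2 X u j * v j)) = v t"
proof -
  have "(\<Sum>u\<in>{1..N}. E t u * (\<Sum>j\<in>{1..N}. G2 X u j * v j)) = (\<Sum>j\<in>{1..N}. (\<Sum>u\<in>{1..N}. E t u * G2 X u j) * v j)"
    by (rule swap3)
  also have "\<dots> = (\<Sum>j\<in>{1..N}. (if t = j then 1 else 0) * v j)"
    using E2 t by (intro sum.cong) auto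
  also have "\<dots> = v t" using t by (simp only: sum_delta_l[OF finite_atLeastAtMost])
  finally show ?thesis .
qed

end

context fins begin

lemma main:
  assumes q: "qq R > 0"
  shows "\<forall>p\<in>{1..N}. \<forall>q\<in>{1..N}. \<forall>r\<in>{1..N}. \<forall>s\<in>{1..N}.
           Scurv N rr g p q r s R =
             (- (g^2 / 4)) * (hten N rr g p r R * hten N rr g q s R
                              - hten N rr g p s R * hten N rr g q r R) / (fK N rr g R)^2"
proof -
  obtain E where Eg: "ginv N rr g R = E"
    and E1: "\<forall>p\<in>{1..N}. \<forall>s\<in>{1..N}. (\<Sum>j\<in>{1..N}. G2 R p j * E j s) = (if p = s then 1 else 0)"
    and E2: "\<forall>p\<in>{1..N}. \<forall>s\<in>{1..N}. (\<Sum>j\<in>{1..N}. E p j * G2 R j s) = (if p = s then 1 else 0)"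
    using ginv_eq[OF q] by blast
  define K2 where "K2 = PP R * BB R"
  have K2p: "K2 > 0" using PP_pos[of R] BB_pos[OF q] by (simp add: K2_def)
  have fK: "(fK N rr g R)^2 = K2" using fK2_eq[of R] by (simp add: fK2_def K2_def)
  define h where "h a b = hten N rr g a b R" for a b
  have ht: "h a b = G2 R a b - R1 R a * R1 R b / K2" if "a \<in> {1..N}" "b \<in> {1..N}" for a b
    unfolding h_def hten_def using that by (simp add: gmet_eq[OF q] Rlow_eq[OF q] fK)
  have hf: "h a b = PP R * (rho R a b + BB R * mm R a * mm R b)" if "a \<in> {1..N}" "b \<in> {1..N}" for a b
    using ht[OF that] h_form[OF q, of a b] by (simp add: K2_def)
  have Ct: "Cartan N rr g p j r R = C3 R p j r" if "p \<in> {1..N}" "j \<in> {1..N}" "r \<in> {1..N}" for p j r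
    using Cartan_eq[OF q that] .
  have Sc: "Scurv N rr g p q r s R = (\<Sum>t\<in>{1..N}. Cartan N rr g t q r R * (\<Sum>u\<in>{1..N}. E t u * Cartan N rr g p u s R)
        - Cartan N rr g t q s R * (\<Sum>u\<in>{1..N}. E t u * Cartan N rr g p u r R))" for p q r s
    by (simp add: Scurv_def Cmixed_def Eg)
  have abs: "\<forall>p\<in>{1..N}. \<forall>q\<in>{1..N}. \<forall>r\<in>{1..N}. \<forall>s\<in>{1..N}.
     (\<Sum>t\<in>{1..N}. Cartan N rr g t q r R * (\<Sum>u\<in>{1..N}. E t u * Cartan N rr g p u s R) - Cartan N rr g t q s R * (\<Sum>u\<in>{1..N}. E t u * Cartan N rr g p u r R))
       = - ((g/2)^2) * (1 / K2) * (h p r * h q s - h p s * h q r)"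
  proof (rule curv_abstract[where m = "mm R" and mu = "mu R" and X = R and Rl = "R1 R" and be = "- (g/2) * K2"])
    show "finite {1..N}" by simp
    show "\<forall>a\<in>{1..N}. \<forall>b\<in>{1..N}. h a b = h b a"
    proof (intro ballI)
      fix a b assume a: "a \<in> {1..N}" and b: "b \<in> {1..N}"
      show "h a b = h b a" unfolding ht[OF a b] ht[OF b a] G2_sym[OF q, of a b] by (simp add: mult.commute)
    qed
    show "\<forall>t\<in>{1..N}. \<forall>s\<in>{1..N}. (\<Sum>u\<in>{1..N}. E t u * h u s) = (if t = s then 1 else 0) - R t * R1 R s / K2"
    proof (intro ballI)
      fix t s assume t: "t \<in> {1..N}" and s: "s \<in> {1..N}"
      have "(\<Sum>u\<in>{1..N}. E t u * h u s) = (\<Sum>u\<in>{1..N}. E t u * G2 R u s - (R1 R s / K2) * (E t u * R1 R u))"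
        using s by (intro sum.cong) (auto simp: ht algebra_simps)
      also have "\<dots> = (\<Sum>u\<in>{1..N}. E t u * G2 R u s) - (R1 R s / K2) * (\<Sum>u\<in>{1..N}. E t u * R1 R u)"
        by (simp only: sum_subtractf sum_distrib_left)
      also have "(\<Sum>u\<in>{1..N}. E t u * R1 R u) = (\<Sum>u\<in>{1..N}. E t u * (\<Sum>j\<in>{1..N}. G2 R u j * R j))"
        by (simp only: G2_X[OF q])
      also have "\<dots> = R t" by (rule E_apply[OF q t E2])
      also have "(\<Sum>u\<in>{1..N}. E t u * G2 R u s) = (if t = s then 1 else 0)" using E2 t s by simp
      finally show "(\<Sum>u\<in>{1..N}. E t u * h u s) = (if t = s then 1 else 0) - R t * R1 R s / K2" by simp
    qed
    show "\<forall>t\<in>{1..N}. (\<Sum>u\<in>{1..N}. E t u * mm R u) = mu R t"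
    proof
      fix t assume t: "t \<in> {1..N}"
      have "(\<Sum>u\<in>{1..N}. E t u * mm R u) = (\<Sum>u\<in>{1..N}. E t u * (\<Sum>j\<in>{1..N}. G2 R u j * mu R j))"
        by (simp only: G2_mu[OF q])
      also have "\<dots> = mu R t" by (rule E_apply[OF q t E2])
      finally show "(\<Sum>u\<in>{1..N}. E t u * mm R u) = mu R t" .
    qed
    show "\<forall>s\<in>{1..N}. (\<Sum>t\<in>{1..N}. mu R t * h t s) = mm R s"
    proof
      fix s assume s: "s \<in> {1..N}"
      have "(\<Sum>t\<in>{1..N}. mu R t * h t s) = (\<Sum>t\<in>{1..N}. G2 R s t * mu R t - (R1 R s / K2) * (R1 R t * mu R t))"
        using s by (intro sum.cong) (auto simp: ht G2_sym[OF q, of _ s] algebra_simps)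
      also have "\<dots> = (\<Sum>t\<in>{1..N}. G2 R s t * mu R t) - (R1 R s / K2) * (\<Sum>t\<in>{1..N}. R1 R t * mu R t)"
        by (simp only: sum_subtractf sum_distrib_left)
      also have "\<dots> = mm R s" by (simp only: G2_mu[OF q] s_R1mu[OF q] mult_zero_right diff_zero)
      finally show "(\<Sum>t\<in>{1..N}. mu R t * h t s) = mm R s" .
    qed
    show "\<forall>s\<in>{1..N}. (\<Sum>t\<in>{1..N}. R t * h t s) = 0"
    proof
      fix s assume s: "s \<in> {1..N}"
      have "(\<Sum>t\<in>{1..N}. R t * h t s) = (\<Sum>t\<in>{1..N}. G2 R s t * R t - (R1 R s / K2) * (R1 R t * R t))"
        using s by (intro sum.cong) (auto simp: ht G2_sym[OF q, of _ s] algebra_simps)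
      also have "\<dots> = (\<Sum>t\<in>{1..N}. G2 R s t * R t) - (R1 R s / K2) * (\<Sum>t\<in>{1..N}. R1 R t * R t)"
        by (simp only: sum_subtractf sum_distrib_left)
      also have "\<dots> = 0" unfolding G2_X[OF q] s_R1X[OF q] K2_def[symmetric] using K2p by simp
      finally show "(\<Sum>t\<in>{1..N}. R t * h t s) = 0" .
    qed
    show "(\<Sum>t\<in>{1..N}. mm R t * R t) = 0" by (rule s_mmX[OF q])
    show "1 / K2 = (\<Sum>t\<in>{1..N}. mu R t * mm R t)" unfolding s_mu_mm[OF q] K2_def ..
    show "g / 2 + - (g / 2) * K2 * (1 / K2) = 0" using K2p by simp
    show "\<forall>p\<in>{1..N}. \<forall>q\<in>{1..N}. \<forall>r\<in>{1..N}. Cartan N rr g p q r R =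
       g / 2 * (mm R p * h q r + mm R q * h p r + mm R r * h p q) + - (g / 2) * K2 * mm R p * mm R q * mm R r"
      by (simp add: Ct hf C3_def K2_def algebra_simps)
  qed
  show ?thesis
  proof (intro ballI)
    fix p q r s assume p: "p \<in> {1..N}" and q': "q \<in> {1..N}" and r: "r \<in> {1..N}" and s: "s \<in> {1..N}"
    show "Scurv N rr g p q r s R =
             (- (g^2 / 4)) * (hten N rr g p r R * hten N rr g q s R
                              - hten N rr g p s R * hten N rr g q r R) / (fK N rr g R)^2"
      unfolding Sc fK using abs p q' r s by (simp add: h_def power2_eq_square)
  qed
qed

end

theorem theorem2p2:
  fixes N :: nat and rr :: "nat \<Rightarrow> nat \<Rightarrow> real" and g :: real and R :: "nat \<Rightarrow> real"
  assumes "N \<ge> 2"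
    and "\<forall>a\<in>{1..<N}. \<forall>b\<in>{1..<N}. rr a b = rr b a"
    and "\<forall>x :: nat \<Rightarrow> real. (\<exists>a\<in>{1..<N}. x a \<noteq> 0) \<longrightarrow>
           (\<Sum>a\<in>{1..<N}. \<Sum>b\<in>{1..<N}. rr a b * x a * x b) > 0"
    and "-2 < g" and "g < 2"
    and "fq N rr R > 0"
  shows "\<forall>p\<in>{1..N}. \<forall>q\<in>{1..N}. \<forall>r\<in>{1..N}. \<forall>s\<in>{1..N}.
           Scurv N rr g p q r s R =
             (- (g^2 / 4)) * (hten N rr g p r R * hten N rr g q s R
                              - hten N rr g p s R * hten N rr g q r R) / (fK N rr g R)^2"
proof -
  interpret fins N rr g using assms(1-5) by unfold_locales
  show ?thesis using main assms(6) by blast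
qed

end
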